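(* Let $C$ be an $E$-linear code of length $2n$. Then: (1) if $C$ is free, $(C^{\perp_{S_L}})^{\perp_{S_L}}=C$; (2) if $C_{Res}=\{0\}$ and $C_{Tor}=\mathbb{F}_2^{2n}$, $(C^{\perp_{S_R}})^{\perp_{S_R}}=C$; (3) $(C^{\perp_S})^{\perp_S}=C$.
   Context: $E=\langle \kappa,\tau \mid 2\kappa=2\tau=0,\ \kappa^2=\kappa,\ \tau^2=\tau,\ \kappa\tau=\kappa,\ \tau\kappa=\tau\rangle$ is the non-unital ring $\{0,\kappa,\tau,\zeta\}$, $\zeta=\kappa+\tau$, with $e\kappa=e\tau=e$, $e\zeta=0$ for all $e\in E$. Every $e\in E$ is uniquely $u\kappa+v\zeta$ ($u,v\in\mathbb{F}_2$); $\pi(u\kappa+v\zeta)=u$, componentwise. An $E$-linear code of length $2n$ is a left $E$-submodule $C\subseteq E^{2n}$; $C_{Res}=\pi(C)$, $C_{Tor}=\{v\in\mathbb{F}_2^{2n}:\zeta v\in C\}$ (componentwise, $0\cdot\zeta=0,1\cdot\zeta=\zeta$); $C$ is free if $C_{Res}=C_{Tor}$. Symplectic inner product: $\langle (u|v),(u'|v')\rangle_s=\sum_i u_iv'_i+\sum_i v_iu'_i$. $C^{\perp_{S_L}}=\{z\in E^{2n}:\langle z,w\rangle_s=0\ \forall w\in C\}$, $C^{\perp_{S_R}}=\{z\in E^{2n}:\langle w,z\rangle_s=0\ \forall w\in C\}$, $C^{\perp_S}=C^{\perp_{S_L}}\cap C^{\perp_{S_R}}$ (all again $E$-linear codes). 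*)

theory Defs
  imports Main
begin

text \<open>The non-unital ring E = {0, kappa, tau, zeta}. Each element is uniquely
  u*kappa + v*zeta with u, v in F_2 (here F_2 = bool, addition = xor).\<close>

datatype E = E0 | Ekappa | Etau | Ezeta

fun Eu :: "E \<Rightarrow> bool" where
  "Eu E0 = False" | "Eu Ekappa = True" | "Eu Etau = True" | "Eu Ezeta = False"

fun Ev :: "E \<Rightarrow> bool" where
  "Ev E0 = False" | "Ev Ekappa = False" | "Ev Etau = True" | "Ev Ezeta = True"

definition Emk :: "bool \<Rightarrow> bool \<Rightarrow> E" where
  "Emk u v = (if u then (if v then Etau else Ekappa) else (if v then Ezeta else E0))"

instantiation E :: "{comm_monoid_add, times}"
begin
definition zero_E :: E where "zero_E = E0"
definition plus_E :: "E \<Rightarrow> E \<Rightarrow> E" where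
  "plus_E a b = Emk (Eu a \<noteq> Eu b) (Ev a \<noteq> Ev b)"
text \<open>a * (u' kappa + v' zeta) = u' a, since e kappa = e tau = e and e zeta = 0.\<close>
definition times_E :: "E \<Rightarrow> E \<Rightarrow> E" where
  "times_E a b = (if Eu b then a else E0)"
instance
proof
  fix a b c :: E
  show "a + b + c = a + (b + c)"
    by (cases a; cases b; cases c) (simp_all add: plus_E_def Emk_def)
  show "a + b = b + a"
    by (cases a; cases b) (simp_all add: plus_E_def Emk_def)
  show "0 + a = a"
    by (cases a) (simp_all add: plus_E_def Emk_def zero_E_def)
qed
end

definition Evecs :: "nat \<Rightarrow> (nat \<Rightarrow> E) set" where
  "Evecs n = {x. \<forall>i\<ge>2*n. x i = 0}"

definition F2vecs :: "nat \<Rightarrow> (nat \<Rightarrow> bool) set" where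
  "F2vecs n = {x. \<forall>i\<ge>2*n. x i = False}"

definition E_linear :: "nat \<Rightarrow> (nat \<Rightarrow> E) set \<Rightarrow> bool" where
  "E_linear n C \<longleftrightarrow> C \<subseteq> Evecs n \<and> (\<lambda>i. 0) \<in> C \<and>
     (\<forall>x\<in>C. \<forall>y\<in>C. (\<lambda>i. x i + y i) \<in> C) \<and>
     (\<forall>e::E. \<forall>x\<in>C. (\<lambda>i. e * x i) \<in> C)"

definition C_Res :: "nat \<Rightarrow> (nat \<Rightarrow> E) set \<Rightarrow> (nat \<Rightarrow> bool) set" where
  "C_Res n C = (\<lambda>x i. Eu (x i)) ` C"

definition zeta_mult :: "(nat \<Rightarrow> bool) \<Rightarrow> (nat \<Rightarrow> E)" where
  "zeta_mult v = (\<lambda>i. if v i then Ezeta else 0)"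

definition C_Tor :: "nat \<Rightarrow> (nat \<Rightarrow> E) set \<Rightarrow> (nat \<Rightarrow> bool) set" where
  "C_Tor n C = {v \<in> F2vecs n. zeta_mult v \<in> C}"

definition is_free :: "nat \<Rightarrow> (nat \<Rightarrow> E) set \<Rightarrow> bool" where
  "is_free n C \<longleftrightarrow> C_Res n C = C_Tor n C"

definition symp :: "nat \<Rightarrow> (nat \<Rightarrow> E) \<Rightarrow> (nat \<Rightarrow> E) \<Rightarrow> E" where
  "symp n x y = (\<Sum>i<n. x i * y (n + i)) + (\<Sum>i<n. x (n + i) * y i)"

definition perpSL :: "nat \<Rightarrow> (nat \<Rightarrow> E) set \<Rightarrow> (nat \<Rightarrow> E) set" where
  "perpSL n C = {z \<in> Evecs n. \<forall>w\<in>C. symp n z w = 0}"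

definition perpSR :: "nat \<Rightarrow> (nat \<Rightarrow> E) set \<Rightarrow> (nat \<Rightarrow> E) set" where
  "perpSR n C = {z \<in> Evecs n. \<forall>w\<in>C. symp n w z = 0}"

definition perpS :: "nat \<Rightarrow> (nat \<Rightarrow> E) set \<Rightarrow> (nat \<Rightarrow> E) set" where
  "perpS n C = perpSL n C \<inter> perpSR n C"

end

theory Submission
  imports Defs "HOL-Library.Z2"
begin
declare add_bit_eq_xor[simp del] mult_bit_eq_and[simp del]

lemma bit_add_self[simp]: "(a::bit) + a = 0"
  by (cases a) simp_all

definition Vsp :: "nat \<Rightarrow> (nat \<Rightarrow> bit) set" where
  "Vsp m = {x. \<forall>i\<ge>m. x i = 0}"

definition dot :: "nat \<Rightarrow> (nat \<Rightarrow> bit) \<Rightarrow> (nat \<Rightarrow> bit) \<Rightarrow> bit" where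
  "dot m x y = (\<Sum>i<m. x i * y i)"

definition subsp :: "nat \<Rightarrow> (nat \<Rightarrow> bit) set \<Rightarrow> bool" where
  "subsp m W \<longleftrightarrow> W \<subseteq> Vsp m \<and> (\<lambda>i. 0) \<in> W \<and> (\<forall>x\<in>W. \<forall>y\<in>W. (\<lambda>i. x i + y i) \<in> W)"

lemma dot_Suc: "dot (Suc m) x y = dot m x y + x m * y m"
  by (simp add: dot_def)

lemma dot_upd: "dot m (x(m := c)) y = dot m x y"
  unfolding dot_def by (rule sum.cong) auto

lemma dot_add: "dot m x (\<lambda>i. y i + z i) = dot m x y + dot m x z"
  unfolding dot_def by (simp add: distrib_left sum.distrib)

lemma dot_smul: "dot m x (\<lambda>i. c * z i) = c * dot m x z"
  unfolding dot_def by (simp add: sum_distrib_left mult.left_commute)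

lemma vsp_Suc: "x \<in> Vsp (Suc m) \<Longrightarrow> x m = 0 \<Longrightarrow> x \<in> Vsp m"
  unfolding Vsp_def
proof (clarify)
  fix i assume "\<forall>i\<ge>Suc m. x i = 0" "x m = 0" "m \<le> i"
  then show "x i = 0" by (cases "i = m") auto
qed

lemma sep:
  assumes "subsp m W" "y \<in> Vsp m" "y \<notin> W"
  shows "\<exists>x\<in>Vsp m. (\<forall>w\<in>W. dot m x w = 0) \<and> dot m x y = 1"
  using assms
proof (induction m arbitrary: W y)
  case 0
  then have "y = (\<lambda>i. 0)" by (auto simp: Vsp_def)
  with 0 show ?case by (auto simp: subsp_def)
next
  case (Suc m)
  note W = Suc.prems(1)[unfolded subsp_def]
  show ?case
  proof (cases "\<forall>w\<in>W. w m = 0")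
    case True
    show ?thesis
    proof (cases "y m = 1")
      case True
      define x where "x = (\<lambda>i. if i = m then (1::bit) else 0)"
      have dx: "dot (Suc m) x v = v m" for v
        unfolding dot_Suc by (simp add: dot_def x_def)
      show ?thesis
      proof (rule bexI[of _ x])
        show "x \<in> Vsp (Suc m)" by (auto simp: Vsp_def x_def)
      qed (use True \<open>\<forall>w\<in>W. w m = 0\<close> in \<open>auto simp: dx\<close>)
    next
      case False
      then have ym: "y m = 0" by simp
      have "subsp m W" using W True vsp_Suc unfolding subsp_def by blast
      moreover have "y \<in> Vsp m" using Suc.prems(2) ym vsp_Suc by blast
      ultimately obtain x where x: "x \<in> Vsp m" "\<forall>w\<in>W. dot m x w = 0" "dot m x y = 1"
        using Suc.IH Suc.prems(3) by blast
      have xm: "x m = 0" using x(1) by (simp add: Vsp_def)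
      show ?thesis
        by (rule bexI[of _ x]) (use x xm in \<open>auto simp: dot_Suc Vsp_def\<close>)
    qed
  next
    case False
    then obtain w0 where w0: "w0 \<in> W" "w0 m = 1" by auto
    define W' where "W' = {w\<in>W. w m = 0}"
    define y' where "y' = (\<lambda>i. y i + y m * w0 i)"
    have "subsp m W'" unfolding subsp_def
    proof (intro conjI ballI)
      show "W' \<subseteq> Vsp m" using W vsp_Suc unfolding W'_def by blast
      show "(\<lambda>i. 0) \<in> W'" using W unfolding W'_def by simp
      fix x y assume "x \<in> W'" "y \<in> W'"
      then show "(\<lambda>i. x i + y i) \<in> W'" using W unfolding W'_def by simp
    qed
    moreover have "y' \<in> Vsp m"
    proof (rule vsp_Suc)
      have "w0 \<in> Vsp (Suc m)" using W w0 by blast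
      then show "y' \<in> Vsp (Suc m)" using Suc.prems(2) unfolding y'_def Vsp_def by simp
      show "y' m = 0" using w0 by (simp add: y'_def)
    qed
    moreover have "y' \<notin> W'"
    proof
      assume "y' \<in> W'"
      then have "y' \<in> W" by (simp add: W'_def)
      have "y \<in> W"
      proof (cases "y m = 0")
        case True then show ?thesis using \<open>y' \<in> W\<close> by (simp add: y'_def)
      next
        case False
        then have "y m = 1" by simp
        then have "y = (\<lambda>i. y' i + w0 i)" by (simp add: y'_def add.assoc)
        then show ?thesis using W \<open>y' \<in> W\<close> w0(1) by metis
      qed
      with Suc.prems(3) show False by simp
    qed
    ultimately obtain x' where x': "x' \<in> Vsp m" "\<forall>w\<in>W'. dot m x' w = 0" "dot m x' y' = 1"
      using Suc.IH by blast
    define c where "c = dot m x' w0"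
    define x where "x = x'(m := c)"
    have dx: "dot (Suc m) x v = dot m x' v + c * v m" for v
      by (simp add: dot_Suc x_def dot_upd)
    have "x \<in> Vsp (Suc m)" using x'(1) by (auto simp: Vsp_def x_def)
    moreover have "dot (Suc m) x w = 0" if "w \<in> W" for w
    proof (cases "w m = 0")
      case True
      then show ?thesis using x'(2) that by (simp add: dx W'_def)
    next
      case False
      then have wm: "w m = 1" by simp
      have "(\<lambda>i. w i + w0 i) \<in> W" using W that w0(1) by blast
      then have "(\<lambda>i. w i + w0 i) \<in> W'" using w0 wm by (simp add: W'_def)
      then have "dot m x' (\<lambda>i. w i + w0 i) = 0" using x'(2) by blast
      then have "dot m x' w + c = 0" by (simp add: dot_add c_def)
      then have "dot m x' w = c"
        by (metis add.assoc add.right_neutral bit_add_self)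
      then show ?thesis by (simp add: dx wm)
    qed
    moreover have "dot (Suc m) x y = 1"
    proof -
      have "dot m x' y + y m * c = 1" using x'(3)
        by (simp add: y'_def dot_add dot_smul c_def)
      then show ?thesis by (simp add: dx mult.commute)
    qed
    ultimately show ?thesis by blast
  qed
qed

definition sp :: "nat \<Rightarrow> (nat \<Rightarrow> bit) \<Rightarrow> (nat \<Rightarrow> bit) \<Rightarrow> bit" where
  "sp n x y = (\<Sum>i<n. x i * y (n + i)) + (\<Sum>i<n. x (n + i) * y i)"

definition pB :: "nat \<Rightarrow> (nat \<Rightarrow> bit) set \<Rightarrow> (nat \<Rightarrow> bit) set" where
  "pB n R = {a \<in> Vsp (2*n). \<forall>r\<in>R. sp n a r = 0}"

lemma sp_comm: "sp n x y = sp n y x"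
  unfolding sp_def by (simp add: mult.commute add.commute)

lemma sp_add1: "sp n (\<lambda>i. a i + b i) r = sp n a r + sp n b r"
  unfolding sp_def by (simp add: distrib_right sum.distrib algebra_simps)

lemma sp_zero1[simp]: "sp n (\<lambda>i. 0) r = 0"
  unfolding sp_def by simp

lemma sp_zero2[simp]: "sp n r (\<lambda>i. 0) = 0"
  unfolding sp_def by simp

lemma sum_split: "(\<Sum>i<n+k. f i) = (\<Sum>i<n. f i) + (\<Sum>i<k. f (n+i::nat))"
  by (induction k) (simp_all add: add.assoc)

lemma pB_subsp: "subsp (2*n) (pB n R)"
  unfolding subsp_def pB_def Vsp_def by (auto simp: sp_add1)

lemma pB_anti: "R \<subseteq> T \<Longrightarrow> pB n T \<subseteq> pB n R"
  unfolding pB_def by auto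

lemma dd:
  assumes "subsp (2*n) W"
  shows "pB n (pB n W) = W"
proof
  show "W \<subseteq> pB n (pB n W)"
    using assms unfolding pB_def subsp_def by (auto simp: sp_comm)
next
  show "pB n (pB n W) \<subseteq> W"
  proof
    fix y assume y: "y \<in> pB n (pB n W)"
    show "y \<in> W"
    proof (rule ccontr)
      assume "y \<notin> W"
      moreover have "y \<in> Vsp (2*n)" using y by (simp add: pB_def)
      ultimately obtain x where x: "x \<in> Vsp (2*n)" "\<forall>w\<in>W. dot (2*n) x w = 0" "dot (2*n) x y = 1"
        using sep[OF assms] by blast
      define z where "z = (\<lambda>i. if i < n then x (n+i) else if i < 2*n then x (i-n) else 0)"
      have spz: "sp n z v = dot (2*n) x v" for v
      proof -
        have "dot (2*n) x v = (\<Sum>i<n. x i * v i) + (\<Sum>i<n. x (n+i) * v (n+i))"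
          unfolding dot_def mult_2 by (rule sum_split)
        moreover have "sp n z v = (\<Sum>i<n. x (n+i) * v (n+i)) + (\<Sum>i<n. x i * v i)"
          unfolding sp_def z_def by simp
        ultimately show ?thesis by (simp add: add.commute)
      qed
      have "z \<in> Vsp (2*n)" by (simp add: Vsp_def z_def)
      then have "z \<in> pB n W" using x(2) by (simp add: pB_def spz)
      then have "sp n y z = 0" using y by (simp add: pB_def)
      moreover have "sp n z y = 1" by (simp add: spz x(3))
      ultimately show False using sp_comm[of n y z] by simp
    qed
  qed
qed

definition hu :: "E \<Rightarrow> bit" where "hu e = of_bool (Eu e)"
definition hv :: "E \<Rightarrow> bit" where "hv e = of_bool (Ev e)"

lemma hu_add[simp]: "hu (a + b) = hu a + hu b"
  by (cases a; cases b) (simp_all add: hu_def plus_E_def Emk_def)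
lemma hv_add[simp]: "hv (a + b) = hv a + hv b"
  by (cases a; cases b) (simp_all add: hv_def plus_E_def Emk_def)
lemma hu_mult[simp]: "hu (a * b) = hu a * hu b"
  by (cases a; cases b) (simp_all add: hu_def times_E_def)
lemma hv_mult[simp]: "hv (a * b) = hv a * hu b"
  by (cases a; cases b) (simp_all add: hu_def hv_def times_E_def)
lemma hu_0[simp]: "hu 0 = 0" by (simp add: hu_def zero_E_def)
lemma hv_0[simp]: "hv 0 = 0" by (simp add: hv_def zero_E_def)
lemma E_eq: "(a::E) = b \<longleftrightarrow> hu a = hu b \<and> hv a = hv b"
  by (cases a; cases b) (simp_all add: hu_def hv_def)
lemma hu_sum: "hu (sum f A) = (\<Sum>i\<in>A. hu (f i))"
  by (induction A rule: infinite_finite_induct) simp_all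
lemma hv_sum: "hv (sum f A) = (\<Sum>i\<in>A. hv (f i))"
  by (induction A rule: infinite_finite_induct) simp_all

definition Uv :: "(nat \<Rightarrow> E) \<Rightarrow> nat \<Rightarrow> bit" where "Uv z = (\<lambda>i. hu (z i))"
definition Vz :: "(nat \<Rightarrow> E) \<Rightarrow> nat \<Rightarrow> bit" where "Vz z = (\<lambda>i. hv (z i))"

lemma symp_zero: "symp n z w = 0 \<longleftrightarrow> sp n (Uv z) (Uv w) = 0 \<and> sp n (Vz z) (Uv w) = 0"
  by (simp add: E_eq[of _ 0] symp_def sp_def hu_sum hv_sum Uv_def Vz_def)

lemma Evecs_iff: "z \<in> Evecs n \<longleftrightarrow> Uv z \<in> Vsp (2*n) \<and> Vz z \<in> Vsp (2*n)"
  unfolding Evecs_def Vsp_def Uv_def Vz_def by (auto simp: E_eq[of _ 0])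

definition mk :: "(nat \<Rightarrow> bit) \<Rightarrow> (nat \<Rightarrow> bit) \<Rightarrow> nat \<Rightarrow> E" where
  "mk a b = (\<lambda>i. Emk (a i = 1) (b i = 1))"

lemma Uv_mk[simp]: "Uv (mk a b) = a"
proof
  fix i show "Uv (mk a b) i = a i"
    by (cases "a i"; cases "b i") (simp_all add: Uv_def mk_def Emk_def hu_def)
qed
lemma Vz_mk[simp]: "Vz (mk a b) = b"
proof
  fix i show "Vz (mk a b) i = b i"
    by (cases "a i"; cases "b i") (simp_all add: Vz_def mk_def Emk_def hv_def)
qed

lemma vec_eq: "(z::nat\<Rightarrow>E) = z' \<longleftrightarrow> Uv z = Uv z' \<and> Vz z = Vz z'"
  unfolding Uv_def Vz_def by (metis E_eq ext)

definition prodE :: "nat \<Rightarrow> (nat \<Rightarrow> bit) set \<Rightarrow> (nat \<Rightarrow> bit) set \<Rightarrow> (nat \<Rightarrow> E) set" where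
  "prodE n R T = {z \<in> Evecs n. Uv z \<in> R \<and> Vz z \<in> T}"

lemma zero_Vsp[simp]: "(\<lambda>i. 0) \<in> Vsp m" by (simp add: Vsp_def)

lemma perpSL_prod:
  assumes "R \<subseteq> Vsp (2*n)" "(\<lambda>i. 0) \<in> T"
  shows "perpSL n (prodE n R T) = prodE n (pB n R) (pB n R)"
proof (intro set_eqI iffI)
  fix z assume z: "z \<in> perpSL n (prodE n R T)"
  then have zE: "z \<in> Evecs n" by (simp add: perpSL_def)
  have "sp n (Uv z) r = 0 \<and> sp n (Vz z) r = 0" if "r \<in> R" for r
  proof -
    have "mk r (\<lambda>i. 0) \<in> prodE n R T"
      using that assms by (auto simp: prodE_def Evecs_iff)
    then show ?thesis using z by (auto simp: perpSL_def symp_zero)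
  qed
  then show "z \<in> prodE n (pB n R) (pB n R)"
    using zE by (auto simp: prodE_def pB_def Evecs_iff)
next
  fix z assume "z \<in> prodE n (pB n R) (pB n R)"
  then show "z \<in> perpSL n (prodE n R T)"
    by (auto simp: prodE_def pB_def perpSL_def symp_zero)
qed

lemma perpSR_prod:
  assumes "R \<subseteq> Vsp (2*n)" "T \<subseteq> Vsp (2*n)" "(\<lambda>i. 0) \<in> R" "(\<lambda>i. 0) \<in> T"
  shows "perpSR n (prodE n R T) = prodE n (pB n R \<inter> pB n T) (Vsp (2*n))"
proof (intro set_eqI iffI)
  fix z assume z: "z \<in> perpSR n (prodE n R T)"
  then have zE: "z \<in> Evecs n" by (simp add: perpSR_def)
  have "sp n (Uv z) r = 0" if "r \<in> R" for r
  proof -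
    have "mk r (\<lambda>i. 0) \<in> prodE n R T"
      using that assms by (auto simp: prodE_def Evecs_iff)
    then show ?thesis using z by (auto simp: perpSR_def symp_zero sp_comm)
  qed
  moreover have "sp n (Uv z) t = 0" if "t \<in> T" for t
  proof -
    have "mk (\<lambda>i. 0) t \<in> prodE n R T"
      using that assms by (auto simp: prodE_def Evecs_iff)
    then show ?thesis using z by (auto simp: perpSR_def symp_zero sp_comm)
  qed
  ultimately show "z \<in> prodE n (pB n R \<inter> pB n T) (Vsp (2*n))"
    using zE by (auto simp: prodE_def pB_def Evecs_iff)
next
  fix z assume "z \<in> prodE n (pB n R \<inter> pB n T) (Vsp (2*n))"
  then show "z \<in> perpSR n (prodE n R T)"
    by (auto simp: prodE_def pB_def perpSR_def symp_zero sp_comm)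
qed

lemma perpS_prod:
  assumes "subsp (2*n) R" "subsp (2*n) T" "R \<subseteq> T"
  shows "perpS n (prodE n R T) = prodE n (pB n T) (pB n R)"
proof -
  have a: "R \<subseteq> Vsp (2*n)" "T \<subseteq> Vsp (2*n)" "(\<lambda>i. 0) \<in> R" "(\<lambda>i. 0) \<in> T"
    using assms by (auto simp: subsp_def)
  have "pB n T \<subseteq> pB n R" using pB_anti[OF assms(3)] .
  moreover have "pB n R \<subseteq> Vsp (2*n)" by (auto simp: pB_def)
  ultimately have "prodE n (pB n R) (pB n R) \<inter> prodE n (pB n R \<inter> pB n T) (Vsp (2*n))
     = prodE n (pB n T) (pB n R)" by (auto simp: prodE_def Evecs_iff)
  then show ?thesis
    unfolding perpS_def perpSL_prod[OF a(1) a(4)] perpSR_prod[OF a] .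
qed

lemma hu_consts[simp]: "hu Ekappa = 1" "hv Ekappa = 0" "hu Ezeta = 0" "hv Ezeta = 1"
  by (simp_all add: hu_def hv_def)
lemma hu_kappa: "hu (Ekappa * e) = hu e" "hv (Ekappa * e) = 0"
  by simp_all
lemma hu_zeta: "hu (Ezeta * e) = 0" "hv (Ezeta * e) = hu e"
  by simp_all

definition Bv :: "(nat \<Rightarrow> bool) \<Rightarrow> nat \<Rightarrow> bit" where "Bv v = (\<lambda>i. of_bool (v i))"

lemma Uv_add: "Uv (\<lambda>i. x i + y i) = (\<lambda>i. Uv x i + Uv y i)" by (simp add: Uv_def)
lemma Vz_add: "Vz (\<lambda>i. x i + y i) = (\<lambda>i. Vz x i + Vz y i)" by (simp add: Vz_def)

context
  fixes n C assumes lin: "E_linear n C"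
begin

lemma CE: "C \<subseteq> Evecs n" and C0: "(\<lambda>i. 0) \<in> C"
  and Cadd: "x \<in> C \<Longrightarrow> y \<in> C \<Longrightarrow> (\<lambda>i. x i + y i) \<in> C"
  and Csm: "x \<in> C \<Longrightarrow> (\<lambda>i. e * x i) \<in> C"
  using lin unfolding E_linear_def by blast+

lemma C_prod: "C = prodE n (Uv ` C) (Vz ` C)"
proof (intro set_eqI iffI)
  fix z assume "z \<in> C" then show "z \<in> prodE n (Uv ` C) (Vz ` C)"
    using CE by (auto simp: prodE_def)
next
  fix z assume "z \<in> prodE n (Uv ` C) (Vz ` C)"
  then obtain a b where ab: "a \<in> C" "b \<in> C" "Uv z = Uv a" "Vz z = Vz b"
    by (auto simp: prodE_def)
  define c where "c = (\<lambda>i. (Ekappa * a i) + (b i + Ekappa * b i))"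
  have "hu (z i) = hu (a i)" "hv (z i) = hv (b i)" for i
    using ab(3,4) unfolding Uv_def Vz_def by (simp_all add: fun_eq_iff)
  then have "c = z" unfolding vec_eq
    by (simp add: c_def Uv_def Vz_def fun_eq_iff)
  moreover have "c \<in> C" unfolding c_def using ab by (intro Cadd Csm)
  ultimately show "z \<in> C" by simp
qed

lemma R_subsp: "subsp (2*n) (Uv ` C)"
  unfolding subsp_def
proof (intro conjI ballI)
  show "Uv ` C \<subseteq> Vsp (2*n)" using CE by (auto simp: Evecs_iff)
  show "(\<lambda>i. 0) \<in> Uv ` C" using C0 by (force simp: Uv_def)
  fix x y assume "x \<in> Uv ` C" "y \<in> Uv ` C"
  then show "(\<lambda>i. x i + y i) \<in> Uv ` C" using Cadd by (auto simp flip: Uv_add)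
qed

lemma T_subsp: "subsp (2*n) (Vz ` C)"
  unfolding subsp_def
proof (intro conjI ballI)
  show "Vz ` C \<subseteq> Vsp (2*n)" using CE by (auto simp: Evecs_iff)
  show "(\<lambda>i. 0) \<in> Vz ` C" using C0 by (force simp: Vz_def)
  fix x y assume "x \<in> Vz ` C" "y \<in> Vz ` C"
  then show "(\<lambda>i. x i + y i) \<in> Vz ` C" using Cadd by (auto simp flip: Vz_add)
qed

lemma R_sub_T: "Uv ` C \<subseteq> Vz ` C"
proof
  fix r assume "r \<in> Uv ` C"
  then obtain x where x: "x \<in> C" "r = Uv x" by auto
  have "(\<lambda>i. Ezeta * x i) \<in> C" using Csm x(1) .
  moreover have "Vz (\<lambda>i. Ezeta * x i) = r" by (simp add: x Vz_def Uv_def hu_zeta)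
  ultimately show "r \<in> Vz ` C" by force
qed

lemma R_Res: "Uv ` C = Bv ` C_Res n C"
  unfolding C_Res_def image_image by (simp add: Uv_def Bv_def hu_def)

lemma T_Tor: "Vz ` C = Bv ` C_Tor n C"
proof (intro set_eqI iffI)
  fix t assume "t \<in> Vz ` C"
  then obtain x where x: "x \<in> C" "t = Vz x" by auto
  define v where "v = (\<lambda>i. Ev (x i))"
  have "v \<in> F2vecs n" using CE x(1) by (auto simp: v_def F2vecs_def Evecs_def zero_E_def)
  moreover have "zeta_mult v = (\<lambda>i. x i + Ekappa * x i)"
  proof
    fix i show "zeta_mult v i = x i + Ekappa * x i"
      by (cases "x i") (simp_all add: zeta_mult_def v_def plus_E_def times_E_def Emk_def zero_E_def)
  qed
  moreover have "(\<lambda>i. x i + Ekappa * x i) \<in> C" using x(1) by (intro Cadd Csm)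
  ultimately have "v \<in> C_Tor n C" by (simp add: C_Tor_def)
  moreover have "t = Bv v" by (simp add: x Bv_def v_def Vz_def hv_def)
  ultimately show "t \<in> Bv ` C_Tor n C" by blast
next
  fix t assume "t \<in> Bv ` C_Tor n C"
  then obtain v where v: "zeta_mult v \<in> C" "t = Bv v" by (auto simp: C_Tor_def)
  have "Vz (zeta_mult v) = t"
    by (simp add: v fun_eq_iff Vz_def Bv_def zeta_mult_def hv_def zero_E_def)
  with v show "t \<in> Vz ` C" by force
qed

lemma Bv_F2: "Bv ` F2vecs n = Vsp (2*n)"
proof (intro set_eqI iffI)
  fix a assume "a \<in> Bv ` F2vecs n" then show "a \<in> Vsp (2*n)"
    by (auto simp: Bv_def F2vecs_def Vsp_def)
next
  fix a assume a: "a \<in> Vsp (2*n)"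
  have "a = Bv (\<lambda>i. a i = 1)"
  proof
    fix i show "a i = Bv (\<lambda>i. a i = 1) i" by (cases "a i") (simp_all add: Bv_def)
  qed
  moreover have "(\<lambda>i. a i = 1) \<in> F2vecs n" using a by (simp add: F2vecs_def Vsp_def)
  ultimately show "a \<in> Bv ` F2vecs n" by blast
qed

end

theorem mainTheorem9:
  assumes "E_linear n C"
  shows "(is_free n C \<longrightarrow> perpSL n (perpSL n C) = C)
       \<and> (C_Res n C = {(\<lambda>i. False)} \<and> C_Tor n C = F2vecs n \<longrightarrow> perpSR n (perpSR n C) = C)
       \<and> perpS n (perpS n C) = C"
proof (intro conjI impI)
  define R where "R = Uv ` C"
  define T where "T = Vz ` C"
  have CP: "C = prodE n R T" unfolding R_def T_def using C_prod[OF assms] .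
  have sR: "subsp (2*n) R" and sT: "subsp (2*n) T" and RT: "R \<subseteq> T"
    unfolding R_def T_def using R_subsp[OF assms] T_subsp[OF assms] R_sub_T[OF assms] by auto
  {
    assume "is_free n C"
    then have "R = T" unfolding R_def T_def is_free_def R_Res[OF assms] T_Tor[OF assms] by simp
    have R1: "R \<subseteq> Vsp (2*n)" "(\<lambda>i. 0) \<in> R" using sR by (auto simp: subsp_def)
    have R2: "pB n R \<subseteq> Vsp (2*n)" "(\<lambda>i. 0) \<in> pB n R" using pB_subsp[of n R] by (auto simp: subsp_def)
    show "perpSL n (perpSL n C) = C"
      unfolding CP \<open>R = T\<close>[symmetric] perpSL_prod[OF R1] perpSL_prod[OF R2] dd[OF sR] ..
  }
  {
    assume h: "C_Res n C = {(\<lambda>i. False)} \<and> C_Tor n C = F2vecs n"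
    have R0: "R = {\<lambda>i. 0}" unfolding R_def R_Res[OF assms] using h by (simp add: Bv_def)
    have TV: "T = Vsp (2*n)" unfolding T_def T_Tor[OF assms] using h Bv_F2[OF assms] by simp
    have s0: "subsp (2*n) {\<lambda>i. 0}" by (simp add: subsp_def)
    have p0: "pB n {\<lambda>i. 0} = Vsp (2*n)" by (auto simp: pB_def)
    have pV: "pB n (Vsp (2*n)) = {\<lambda>i. 0}" using dd[OF s0] p0 by simp
    have a: "R \<subseteq> Vsp (2*n)" "T \<subseteq> Vsp (2*n)" "(\<lambda>i. 0) \<in> R" "(\<lambda>i. 0) \<in> T"
      using sR sT by (auto simp: subsp_def)
    have "perpSR n C = C"
      unfolding CP perpSR_prod[OF a] using R0 TV p0 pV by simp
    then show "perpSR n (perpSR n C) = C" by simp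
  }
  show "perpS n (perpS n C) = C"
  proof -
    have "perpS n C = prodE n (pB n T) (pB n R)" unfolding CP by (rule perpS_prod[OF sR sT RT])
    also have "perpS n \<dots> = prodE n (pB n (pB n R)) (pB n (pB n T))"
      by (rule perpS_prod[OF pB_subsp pB_subsp pB_anti[OF RT]])
    also have "\<dots> = C" unfolding dd[OF sR] dd[OF sT] CP ..
    finally show ?thesis .
  qed
qed
end
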